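(* $N(k,3) = 2k$ for all integers $k \geq 9$.
   Context: A $k$-power is a word of the form $u^k$ (concatenation of $k$ copies of $u$) with $u$ nonempty. A $3$-antipower is a word $u_1u_2u_3$ with $|u_1|=|u_2|=|u_3|$ and $u_1,u_2,u_3$ pairwise distinct. $N(k,r)$ is the smallest integer $\ell$ such that every binary word of length $\ell$ contains either a $k$-power or an $r$-antipower as a factor (contiguous subword). *)

theory Defs
  imports Main
begin

definition is_factor :: "'a list \<Rightarrow> 'a list \<Rightarrow> bool" where
  "is_factor v w \<longleftrightarrow> (\<exists>x y. w = x @ v @ y)"

definition is_power :: "nat \<Rightarrow> 'a list \<Rightarrow> bool" where
  "is_power k w \<longleftrightarrow> (\<exists>u. u \<noteq> [] \<and> w = concat (replicate k u))"

definition is_antipower :: "nat \<Rightarrow> 'a list \<Rightarrow> bool" where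
  "is_antipower r w \<longleftrightarrow> (\<exists>us. length us = r \<and> w = concat us \<and> distinct us \<and>
       (\<forall>u\<in>set us. \<forall>v\<in>set us. length u = length v))"

definition N :: "nat \<Rightarrow> nat \<Rightarrow> nat" where
  "N k r = (LEAST l. \<forall>w :: bool list. length w = l \<longrightarrow>
      (\<exists>v. is_factor v w \<and> (is_power k v \<or> is_antipower r v)))"

end

theory Submission
  imports Defs
begin

definition blk :: "'a list \<Rightarrow> nat \<Rightarrow> nat \<Rightarrow> 'a list" where
  "blk w i m = take m (drop i w)"

definition apw :: "'a list \<Rightarrow> nat \<Rightarrow> nat \<Rightarrow> bool" where
  "apw w i m = (blk w i m \<noteq> blk w (i+m) m \<and> blk w (i+m) m \<noteq> blk w (i+2*m) m \<and> blk w i m \<noteq> blk w (i+2*m) m)"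

definition af :: "'a list \<Rightarrow> bool" where
  "af w = (\<forall>i m. 0 < m \<longrightarrow> i + 3*m \<le> length w \<longrightarrow> \<not> apw w i m)"

definition ok_end :: "'a list \<Rightarrow> bool" where
  "ok_end w = list_all (\<lambda>m. \<not> apw w (length w - 3*m) m) [1..<length w div 3 + 1]"

fun iter :: "nat \<Rightarrow> bool list list" where
  "iter 0 = [[]]"
| "iter (Suc n) = filter ok_end (concat (map (\<lambda>v. [v@[False], v@[True]]) (iter n)))"

definition F12 :: "bool list list" where
  "F12 = map (map (\<lambda>d::nat. d = 1)) [[0,0,0,0,0,0,0,0,0,0,0,0], [0,0,0,0,0,0,0,0,0,0,0,1], [0,0,0,0,0,0,0,0,0,0,1,0], [0,0,0,0,0,0,0,0,0,0,1,1], [0,0,0,0,0,0,0,0,0,1,0,0], [0,0,0,0,0,0,0,0,0,1,0,1], [0,0,0,0,0,0,0,0,1,0,0,0], [0,0,0,0,0,0,0,1,0,0,0,0], [0,0,0,0,0,0,1,0,0,0,0,0], [0,0,0,0,0,1,0,0,0,0,0,0], [0,0,0,0,1,0,0,0,0,0,0,0], [0,0,0,1,0,0,0,0,0,0,0,0], [0,0,1,0,0,0,0,0,0,0,0,0], [0,0,1,1,1,1,1,1,1,1,1,1], [0,1,0,0,0,0,0,0,0,0,0,0], [0,1,0,1,0,1,0,1,0,1,0,1], [0,1,0,1,1,1,1,1,1,1,1,1], [0,1,1,1,1,1,1,1,1,1,1,1], [1,0,0,0,0,0,0,0,0,0,0,0], [1,0,1,0,0,0,0,0,0,0,0,0], [1,0,1,0,1,0,1,0,1,0,1,0],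 [1,0,1,1,1,1,1,1,1,1,1,1], [1,1,0,0,0,0,0,0,0,0,0,0], [1,1,0,1,1,1,1,1,1,1,1,1], [1,1,1,0,1,1,1,1,1,1,1,1], [1,1,1,1,0,1,1,1,1,1,1,1], [1,1,1,1,1,0,1,1,1,1,1,1], [1,1,1,1,1,1,0,1,1,1,1,1], [1,1,1,1,1,1,1,0,1,1,1,1], [1,1,1,1,1,1,1,1,0,1,1,1], [1,1,1,1,1,1,1,1,1,0,1,0], [1,1,1,1,1,1,1,1,1,0,1,1], [1,1,1,1,1,1,1,1,1,1,0,0], [1,1,1,1,1,1,1,1,1,1,0,1], [1,1,1,1,1,1,1,1,1,1,1,0], [1,1,1,1,1,1,1,1,1,1,1,1]]"

definition ty :: "bool list \<Rightarrow> nat" where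
  "ty v = (if list_all (\<lambda>i. v!i \<noteq> v!(i+1)) [0..<11] then 2
           else if 6 \<le> length (filter id v) then 1 else 0)"

lemma comp12: "set (iter 12) \<subseteq> set F12"
  by code_simp

lemma comp_slide: "list_all (\<lambda>v. list_all (\<lambda>e. tl v @ [e] \<in> set F12 \<longrightarrow> ty (tl v @ [e]) = ty v) [False,True]) F12"
  by code_simp

lemma comp_pair: "list_all (\<lambda>v. ty v \<noteq> 2 \<longrightarrow> list_all (\<lambda>a. list_all (\<lambda>b. a < b \<and> v!a \<noteq> (ty v = 1) \<and> v!b \<noteq> (ty v = 1) \<longrightarrow> b - a \<le> 2 \<and> (a = 0 \<or> b = 11)) [0..<12]) [0..<12]) F12"
  by code_simp


lemma blk_len: "i + m \<le> length w \<Longrightarrow> length (blk w i m) = m"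
  by (simp add: blk_def)

lemma blk_nth: "j < m \<Longrightarrow> i + j < length w \<Longrightarrow> blk w i m ! j = w ! (i+j)"
  by (simp add: blk_def)

lemma blk_factor: "is_factor (blk w i m) w"
  unfolding is_factor_def blk_def
  by (rule exI[of _ "take i w"], rule exI[of _ "drop (i+m) w"])
     (metis append_take_drop_id drop_drop add.commute)

lemma blk_snoc: "i + m \<le> length w \<Longrightarrow> blk (w@[e]) i m = blk w i m"
  by (simp add: blk_def)

lemma apw_snoc: "i + 3*m \<le> length w \<Longrightarrow> apw (w@[e]) i m = apw w i m"
  by (simp add: apw_def blk_snoc)

lemma af_snoc: "af (w@[e]) = (af w \<and> ok_end (w@[e]))"
proof
  assume A: "af (w@[e])"
  have "af w" unfolding af_def
  proof (intro allI impI)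
    fix i m assume "0 < (m::nat)" "i + 3*m \<le> length w"
    have "apw (w@[e]) i m = apw w i m" using apw_snoc[OF \<open>i + 3*m \<le> length w\<close>] .
    moreover have "\<not> apw (w@[e]) i m" using A \<open>0 < m\<close> \<open>i + 3*m \<le> length w\<close> unfolding af_def by simp
    ultimately show "\<not> apw w i m" by simp
  qed
  moreover have "ok_end (w@[e])" unfolding ok_end_def list_all_iff
  proof
    fix m assume "m \<in> set [1..<length (w@[e]) div 3 + 1]"
    then have "0 < m" "length (w@[e]) - 3*m + 3*m \<le> length (w@[e])" by auto
    with A show "\<not> apw (w@[e]) (length (w@[e]) - 3*m) m" unfolding af_def by blast
  qed
  ultimately show "af w \<and> ok_end (w@[e])" by blast
next
  assume B: "af w \<and> ok_end (w@[e])"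
  show "af (w@[e])" unfolding af_def
  proof (intro allI impI)
    fix i m assume m: "0 < (m::nat)" and im: "i + 3*m \<le> length (w@[e])"
    show "\<not> apw (w@[e]) i m"
    proof (cases "i + 3*m \<le> length w")
      case True
      with B m show ?thesis unfolding af_def by (simp add: apw_snoc)
    next
      case False
      with im have i: "i = length (w@[e]) - 3*m" by simp
      have "m \<in> set [1..<length (w@[e]) div 3 + 1]" using m im by auto
      with B i show ?thesis unfolding ok_end_def list_all_iff by blast
    qed
  qed
qed

lemma iter_Suc_mem: "xs \<in> set (iter n) \<Longrightarrow> ok_end (xs@[x]) \<Longrightarrow> xs@[x] \<in> set (iter (Suc n))"
proof -
  assume a: "xs \<in> set (iter n)" and b: "ok_end (xs@[x])"
  have "xs@[x] \<in> set [xs@[False], xs@[True]]" by (cases x) simp_all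
  then have "xs@[x] \<in> set (concat (map (\<lambda>v. [v@[False], v@[True]]) (iter n)))"
    using a by auto
  then show ?thesis using b by simp
qed

lemma iter_complete: "af v \<Longrightarrow> v \<in> set (iter (length v))"
proof (induction v rule: rev_induct)
  case Nil
  then show ?case by simp
next
  case (snoc x xs)
  have "af xs" "ok_end (xs@[x])" using af_snoc[of xs x] snoc.prems by simp_all
  with snoc.IH have "xs \<in> set (iter (length xs))" by simp
  then have "xs@[x] \<in> set (iter (Suc (length xs)))" using \<open>ok_end (xs@[x])\<close> by (rule iter_Suc_mem)
  then show ?case by simp
qed

lemma af_blk: assumes "af w" "s + L \<le> length w" shows "af (blk w s L)"
  unfolding af_def
proof (intro allI impI)
  fix i m assume m: "0 < (m::nat)" and im: "i + 3*m \<le> length (blk w s L)"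
  have L: "length (blk w s L) = L" using assms(2) by (simp add: blk_def)
  have e: "\<And>j. j + m \<le> L \<Longrightarrow> blk (blk w s L) j m = blk w (s+j) m"
    by (simp add: blk_def drop_take take_take min_def add.commute)
  have "apw (blk w s L) i m = apw w (s+i) m"
    using im L unfolding apw_def by (simp add: e add.assoc)
  moreover have "\<not> apw w (s+i) m" using assms m im L unfolding af_def by simp
  ultimately show "\<not> apw (blk w s L) i m" by simp
qed

lemma win_F12: assumes "af w" "s + 12 \<le> length w" shows "blk w s 12 \<in> set F12"
proof -
  have "af (blk w s 12)" using af_blk assms by blast
  then have "blk w s 12 \<in> set (iter (length (blk w s 12)))" by (rule iter_complete)
  moreover have "length (blk w s 12) = 12" using assms(2) by (simp add: blk_def)
  ultimately have "blk w s 12 \<in> set (iter 12)" by (simp only:)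
  then show ?thesis using comp12 by (rule subsetD[rotated])
qed

lemma slide: "s + 13 \<le> length w \<Longrightarrow> blk w (s+1) 12 = tl (blk w s 12) @ [w!(s+12)]"
proof (rule nth_equalityI)
  assume a: "s + 13 \<le> length w"
  then show "length (blk w (s+1) 12) = length (tl (blk w s 12) @ [w!(s+12)])" by (simp add: blk_def)
  fix i assume "i < length (blk w (s+1) 12)"
  then have "i < 12" using a by (simp add: blk_def)
  show "blk w (s+1) 12 ! i = (tl (blk w s 12) @ [w!(s+12)]) ! i"
  proof (cases "i = 11")
    case True
    have l: "length (tl (blk w s 12)) = 11" using a by (simp add: blk_def)
    have "(tl (blk w s 12) @ [w!(s+12)]) ! i = w!(s+12)" using True l by (simp add: nth_append)
    moreover have "blk w (s+1) 12 ! i = w ! (s+1+i)" using a \<open>i < 12\<close> by (intro blk_nth) auto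
    moreover have "w ! (s+1+i) = w!(s+12)" using True by (simp add: add.commute)
    ultimately show ?thesis by simp
  next
    case False
    then have i11: "i < 11" using \<open>i < 12\<close> by simp
    have l: "length (tl (blk w s 12)) = 11" using a by (simp add: blk_def)
    have "(tl (blk w s 12) @ [w!(s+12)]) ! i = blk w s 12 ! (Suc i)" using i11 l by (simp add: nth_append nth_tl)
    also have "... = w ! (s + Suc i)" using a i11 by (intro blk_nth) auto
    moreover have "blk w (s+1) 12 ! i = w ! (s+1+i)" using a \<open>i < 12\<close> by (intro blk_nth) auto
    ultimately show ?thesis by simp
  qed
qed

lemma ty_const: assumes "af w" "s + 12 \<le> length w" shows "ty (blk w s 12) = ty (blk w 0 12)"
  using assms(2)
proof (induction s)
  case 0
  then show ?case by simp
next
  case (Suc s)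
  have v: "blk w s 12 \<in> set F12" using win_F12 assms(1) Suc.prems by simp
  have v': "blk w (Suc s) 12 \<in> set F12" using win_F12 assms(1) Suc.prems by blast
  have s13: "s + 13 \<le> length w" using Suc.prems by simp
  have eq: "blk w (Suc s) 12 = tl (blk w s 12) @ [w!(s+12)]" using slide[OF s13] by simp
  have "ty (blk w (Suc s) 12) = ty (blk w s 12)"
  proof -
    have A: "\<forall>e\<in>set [False,True]. tl (blk w s 12) @ [e] \<in> set F12 \<longrightarrow> ty (tl (blk w s 12) @ [e]) = ty (blk w s 12)"
      using comp_slide v unfolding list_all_iff by blast
    have "w!(s+12) \<in> set [False,True]" by (cases "w!(s+12)") (simp only: list.set insert_iff, blast)+
    with A v' show ?thesis unfolding eq by blast
  qed
  with Suc show ?case by simp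
qed

lemma antip: assumes "0 < m" "i + 3*m \<le> length w" "apw w i m"
  shows "\<exists>v. is_factor v w \<and> is_antipower 3 v"
proof (intro exI conjI)
  show "is_factor (blk w i (3*m)) w" by (rule blk_factor)
  have c: "blk w i (3*m) = concat [blk w i m, blk w (i+m) m, blk w (i+2*m) m]"
  proof -
    have "3*m = m + (m + m)" by simp
    then have "take (3*m) (drop i w) = take m (drop i w) @ take m (drop (i+m) w) @ take m (drop (i+2*m) w)"
      by (simp only: take_add drop_drop) (simp add: add.commute add.left_commute mult_2)
    then show ?thesis by (simp add: blk_def)
  qed
  show "is_antipower 3 (blk w i (3*m))" unfolding is_antipower_def
  proof (rule exI[of _ "[blk w i m, blk w (i+m) m, blk w (i+2*m) m]"], intro conjI)
    have l1: "length (blk w i m) = m" using assms(2) by (intro blk_len) simp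
    have l2: "length (blk w (i+m) m) = m" using assms(2) by (intro blk_len) simp
    have l3: "length (blk w (i+2*m) m) = m" using assms(2) by (intro blk_len) simp
    show "\<forall>u\<in>set [blk w i m, blk w (i+m) m, blk w (i+2*m) m]. \<forall>v\<in>set [blk w i m, blk w (i+m) m, blk w (i+2*m) m]. length u = length v"
      using l1 l2 l3 by simp
    show "distinct [blk w i m, blk w (i+m) m, blk w (i+2*m) m]" using assms(3) unfolding apw_def by simp
  qed (use c in simp_all)
qed

lemma rep_pow: "concat (replicate k [c]) = replicate k c"
  by (induction k) auto

lemma run: assumes "i + k \<le> length w" "\<forall>t<k. w!(i+t) = c" "0 < k"
  shows "is_factor (blk w i k) w \<and> is_power k (blk w i k)"
proof
  show "is_factor (blk w i k) w" by (rule blk_factor)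
  have "blk w i k = replicate k c"
    by (rule nth_equalityI) (use assms in \<open>auto simp: blk_len blk_nth\<close>)
  then show "is_power k (blk w i k)" unfolding is_power_def
    by (intro exI[of _ "[c]"]) (simp add: rep_pow)
qed

lemma alt_nth: "i < 2*k \<Longrightarrow> concat (replicate k [a,b]) ! i = (if even i then a else b)"
proof (induction k arbitrary: i)
  case 0 then show ?case by simp
next
  case (Suc k)
  show ?case
  proof (cases "i < 2")
    case True then show ?thesis by (auto simp: nth_append less_2_cases_iff)
  next
    case False
    then have "concat (replicate (Suc k) [a,b]) ! i = concat (replicate k [a,b]) ! (i-2)"
      by (simp add: nth_append numeral_2_eq_2)
    also have "... = (if even (i-2) then a else b)" using Suc False by simp
    finally show ?thesis using False by auto
  qed
qed


lemma ne_nth: "j < length a \<Longrightarrow> j < length b \<Longrightarrow> a!j \<noteq> b!j \<Longrightarrow> a \<noteq> b"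
  by auto

lemma gapA:
  assumes "w!p \<noteq> c" "w!q \<noteq> c" "\<forall>i. p < i \<and> i < q \<longrightarrow> w!i = c"
    "3*m \<le> q-p+3" "q-p+1 \<le> 3*m" "5 \<le> m" "p < q" "p + 3*m \<le> length w"
  shows "apw w p m"
proof -
  obtain d where d: "q = p + 2*m + d" "d < m" "0 < d" using assms(4-7)
    by (intro that[of "q - p - 2*m"]) arith+
  have l: "q < length w" using d assms(8) by simp
  have e1: "blk w p m ! 0 = w!p" using assms(6) l d by (subst blk_nth) auto
  have e2: "blk w (p+m) m ! 0 = c" using assms(3,6) l d by (subst blk_nth) auto
  have e3: "blk w (p+2*m) m ! 0 = c" using assms(3,6) l d by (subst blk_nth) auto
  have e4: "blk w (p+m) m ! d = c" using assms(3,6) l d by (subst blk_nth) auto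
  have e5: "blk w (p+2*m) m ! d = w!q" using assms(6) l d by (subst blk_nth) (auto simp: add.assoc)
  have L1: "length (blk w p m) = m" using assms(8) by (intro blk_len) simp
  have L2: "length (blk w (p+m) m) = m" using assms(8) by (intro blk_len) simp
  have L3: "length (blk w (p+2*m) m) = m" using assms(8) by (intro blk_len) simp
  show ?thesis unfolding apw_def
  proof (intro conjI)
    show "blk w p m \<noteq> blk w (p+m) m" using e1 e2 assms(1,6) L1 L2 by (intro ne_nth[of 0]) auto
    show "blk w (p+m) m \<noteq> blk w (p+2*m) m" using e4 e5 assms(2) d L2 L3 by (intro ne_nth[of d]) auto
    show "blk w p m \<noteq> blk w (p+2*m) m" using e1 e3 assms(1,6) L1 L3 by (intro ne_nth[of 0]) auto
  qed
qed

lemma gapB: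
  assumes "w!p \<noteq> c" "w!q \<noteq> c" "\<forall>i. p < i \<and> i < q \<longrightarrow> w!i = c"
    "3*m \<le> q-p+3" "q-p+1 \<le> 3*m" "5 \<le> m" "p < q" "3*m \<le> q + 1" "q < length w"
  shows "apw w (q+1-3*m) m"
proof -
  define s where "s = q+1-3*m"
  have qs: "q = s + 2*m + (m - 1)" using assms(6,8) s_def by simp
  obtain j where j: "p = s + j" "j + 1 < m" using assms(4-8) s_def
    by (intro that[of "p - s"]) auto
  have i1: "p < s+(m-1) \<and> s+(m-1) < q" using qs j assms(6) by arith
  have "blk w s m ! (m-1) = w!(s+(m-1))" using assms(6,9) qs by (intro blk_nth) auto
  then have e1: "blk w s m ! (m-1) = c" using assms(3) i1 by simp
  have i2: "p < s+m+(m-1) \<and> s+m+(m-1) < q" using qs j assms(6) by arith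
  have "blk w (s+m) m ! (m-1) = w!(s+m+(m-1))" using assms(6,9) qs by (intro blk_nth) auto
  then have e2: "blk w (s+m) m ! (m-1) = c" using assms(3) i2 by simp
  have e3: "blk w (s+2*m) m ! (m-1) = w!q" using assms(6,9) qs by (subst blk_nth) (auto simp: add.assoc)
  have e4: "blk w s m ! j = w!p" using assms(6,9) qs j by (subst blk_nth) auto
  have i5: "p < s+m+j \<and> s+m+j < q" using qs j assms(6) by arith
  have "blk w (s+m) m ! j = w!(s+m+j)" using assms(6,9) qs j by (intro blk_nth) auto
  then have e5: "blk w (s+m) m ! j = c" using assms(3) i5 by simp
  have L1: "length (blk w s m) = m" using assms(6,9) qs by (intro blk_len) simp
  have L2: "length (blk w (s+m) m) = m" using assms(6,9) qs by (intro blk_len) simp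
  have L3: "length (blk w (s+2*m) m) = m" using assms(6,9) qs by (intro blk_len) simp
  have "apw w s m" unfolding apw_def
  proof (intro conjI)
    show "blk w s m \<noteq> blk w (s+m) m" using e4 e5 assms(1) j L1 L2 by (intro ne_nth[of j]) auto
    show "blk w (s+m) m \<noteq> blk w (s+2*m) m" using e2 e3 assms(2,6) L2 L3 by (intro ne_nth[of "m-1"]) auto
    show "blk w s m \<noteq> blk w (s+2*m) m" using e1 e3 assms(2,6) L1 L3 by (intro ne_nth[of "m-1"]) auto
  qed
  then show ?thesis using s_def by simp
qed

lemma upper:
  fixes w :: "bool list"
  assumes k: "k \<ge> 9" and len: "length w = 2*k"
  shows "\<exists>v. is_factor v w \<and> (is_power k v \<or> is_antipower 3 v)"
proof (rule ccontr)
  assume H: "\<not> ?thesis"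
  have afw: "af w" unfolding af_def
  proof (intro allI impI notI)
    fix i m assume "0 < (m::nat)" "i + 3*m \<le> length w" "apw w i m"
    then obtain v where "is_factor v w" "is_antipower 3 v" using antip by blast
    with H show False by blast
  qed
  have norun: "\<exists>t<k. w!(i+t) \<noteq> c" if "i + k \<le> length w" for i c
  proof (rule ccontr)
    assume "\<not> (\<exists>t<k. w!(i+t) \<noteq> c)"
    then have a: "\<forall>t<k. w!(i+t) = c" by simp
    have "0 < k" using k by simp
    have "is_factor (blk w i k) w \<and> is_power k (blk w i k)" by (rule run[OF that a \<open>0 < k\<close>])
    with H show False by blast
  qed
  define t where "t = ty (blk w 0 12)"
  have tyall: "ty (blk w s 12) = t" if "s + 12 \<le> length w" for s
    using ty_const[OF afw that] t_def by simp
  have win: "blk w s 12 \<in> set F12" if "s + 12 \<le> length w" for s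
    using win_F12[OF afw that] .
  show False
  proof (cases "t = 2")
    case True
    have alt: "w!i \<noteq> w!(i+1)" if i: "i + 1 < length w" for i
    proof -
      define s where "s = min i (length w - 12)"
      have s12: "s + 12 \<le> length w" using len k s_def by simp
      have "ty (blk w s 12) = 2" using tyall[OF s12] True by simp
      then have la: "list_all (\<lambda>j. blk w s 12 ! j \<noteq> blk w s 12 ! (j+1)) [0..<11]"
        unfolding ty_def by (simp split: if_splits)
      have j: "i - s < 11" "s \<le> i" using s_def i by auto
      then have "blk w s 12 ! (i-s) \<noteq> blk w s 12 ! (i-s+1)" using la unfolding list_all_iff by simp
      moreover have "blk w s 12 ! (i-s) = w!i" using j i by (subst blk_nth) auto
      moreover have "blk w s 12 ! (i-s+1) = w!(i+1)" using j i by (subst blk_nth) auto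
      ultimately show ?thesis by simp
    qed
    have par: "i < length w \<Longrightarrow> w!i = (if even i then w!0 else \<not> w!0)" for i
    proof (induction i)
      case 0 then show ?case by simp
    next
      case (Suc i)
      have st: "w!(Suc i) = (\<not> w!i)" using alt[of i] Suc.prems by auto
      have ih: "w!i = (if even i then w!0 else \<not> w!0)" using Suc by simp
      show ?case using st ih by simp
    qed
    have "w = concat (replicate k [w!0, \<not> w!0])"
    proof (rule nth_equalityI)
      have "length (concat (replicate k [w!0, \<not> w!0])) = 2*k" by (induction k) auto
      then show "length w = length (concat (replicate k [w!0, \<not> w!0]))" using len by simp
      fix i assume i: "i < length w"
      have "concat (replicate k [w!0, \<not> w!0]) ! i = (if even i then w!0 else \<not> w!0)"
        using i len by (intro alt_nth) simp
      then show "w!i = concat (replicate k [w!0, \<not> w!0]) ! i" using par[OF i] by simp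
    qed
    then have "is_factor w w \<and> is_power k w" unfolding is_factor_def is_power_def
      by (intro conjI exI[of _ "[]"] exI[of _ "[w!0, \<not> w!0]"]) auto
    with H show False by blast
  next
    case False
    define c where "c = (t = 1)"
    have pair: "b - a \<le> 2 \<and> (a = 0 \<or> b = 11)"
      if "s + 12 \<le> length w" "a < b" "b < 12" "w!(s+a) \<noteq> c" "w!(s+b) \<noteq> c" for s a b
    proof -
      have v: "blk w s 12 \<in> set F12" using win that(1) .
      have tv: "ty (blk w s 12) = t" using tyall that(1) .
      have "blk w s 12 ! a = w!(s+a)" using that by (subst blk_nth) auto
      moreover have "blk w s 12 ! b = w!(s+b)" using that by (subst blk_nth) auto
      moreover have A: "\<forall>a\<in>set [0..<12]. \<forall>b\<in>set [0..<12]. a < b \<and> blk w s 12 !a \<noteq> (ty (blk w s 12) = 1) \<and> blk w s 12 !b \<noteq> (ty (blk w s 12) = 1) \<longrightarrow> b - a \<le> 2 \<and> (a = 0 \<or> b = 11)"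
        using comp_pair v tv False unfolding list_all_iff by blast
      moreover have "a \<in> set [0..<12]" "b \<in> set [0..<12]" using that(2,3) by (simp_all only: set_upt atLeastLessThan_iff) simp_all
      ultimately have "a < b \<and> blk w s 12 !a \<noteq> (ty (blk w s 12) = 1) \<and> blk w s 12 !b \<noteq> (ty (blk w s 12) = 1) \<longrightarrow> b - a \<le> 2 \<and> (a = 0 \<or> b = 11)"
        by blast
      then show ?thesis using that tv c_def \<open>blk w s 12 ! a = w!(s+a)\<close> \<open>blk w s 12 ! b = w!(s+b)\<close> by simp
    qed
    define S where "S = {i. i < k \<and> w!i \<noteq> c}"
    have Sne: "S \<noteq> {}" using norun[of 0 c] len S_def by auto
    have Sfin: "finite S" unfolding S_def by simp
    define p where "p = Max S"
    have pS: "p \<in> S" using Sne Sfin p_def Max_in by blast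
    have pmax: "\<And>i. i \<in> S \<Longrightarrow> i \<le> p" using Sfin p_def by simp
    obtain t0 where t0: "t0 < k" "w!(k+t0) \<noteq> c" "\<forall>t'<t0. w!(k+t') = c"
    proof -
      have "\<exists>t0. t0 < k \<and> w!(k+t0) \<noteq> c" using norun[of k c] len by auto
      then have "\<exists>t0. (t0 < k \<and> w!(k+t0) \<noteq> c) \<and> (\<forall>t'<t0. \<not>(t' < k \<and> w!(k+t') \<noteq> c))"
        by (simp only: exists_least_iff[symmetric])
      then obtain t0 where "t0 < k" "w!(k+t0) \<noteq> c" "\<forall>t'<t0. \<not>(t' < k \<and> w!(k+t') \<noteq> c)" by blast
      then show ?thesis using that[of t0] by auto
    qed
    define q where "q = k + t0"
    have pq: "p < k" "w!p \<noteq> c" using pS S_def by auto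
    have q1: "k \<le> q" "q < 2*k" "w!q \<noteq> c" using t0 q_def by auto
    have between: "\<forall>i. p < i \<and> i < q \<longrightarrow> w!i = c"
    proof (intro allI impI)
      fix i assume i: "p < i \<and> i < q"
      show "w!i = c"
      proof (cases "i < k")
        case True
        then show ?thesis using pmax[of i] i S_def by fastforce
      next
        case False
        then have "i - k < t0" using i q_def by arith
        then have "w!(k+(i-k)) = c" using t0(3) by blast
        then show ?thesis using False by simp
      qed
    qed
    show False
    proof (cases "q - p \<le> 11")
      case True
      show False
      proof (cases "q - p \<ge> 3")
        case True
        define s where "s = min p (2*k - 12)"
        have s1: "s + 12 \<le> length w" using len k unfolding s_def by simp
        have s2: "s \<le> p" unfolding s_def by simp
        have s3: "q \<le> s + 11" using \<open>q - p \<le> 11\<close> q1 len k unfolding s_def by (simp add: min_def) arith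
        have "q - s - (p - s) \<le> 2 \<and> (p - s = 0 \<or> q - s = 11)"
        proof (rule pair)
          show "s + 12 \<le> length w" by (rule s1)
          show "p - s < q - s" using s2 pq q1 by arith
          show "q - s < 12" using s3 s2 pq q1 by arith
          show "w!(s + (p-s)) \<noteq> c" using s2 pq by simp
          show "w!(s + (q-s)) \<noteq> c" using s2 pq q1 by simp
        qed
        then show False using True s2 by arith
      next
        case False
        define s where "s = q - 10"
        have h1: "s + 12 \<le> length w" using s_def len k False q1 pq by arith
        have h2: "s < p" using s_def len k False q1 pq by arith
        have h3: "q < s + 11" using s_def by arith
        have "q - s - (p - s) \<le> 2 \<and> (p - s = 0 \<or> q - s = 11)"
        proof (rule pair)
          show "s + 12 \<le> length w" by (rule h1)
          show "p - s < q - s" using h2 pq q1 by arith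
          show "q - s < 12" using h3 h2 pq q1 by arith
          show "w!(s + (p-s)) \<noteq> c" using h2 pq by simp
          show "w!(s + (q-s)) \<noteq> c" using h2 pq q1 by simp
        qed
        then show False using h2 h3 by arith
      qed
    next
      case False
      define m where "m = (q - p + 3) div 3"
      have m1: "3*m \<le> q-p+3" unfolding m_def by presburger
      have m2: "q-p+1 \<le> 3*m" unfolding m_def by presburger
      have m3: "5 \<le> m" using False unfolding m_def by presburger
      note m = m1 m2 m3
      have "p < q" using False by simp
      have m0: "0 < m" using m3 by simp
      show False
      proof (cases "p + 3*m \<le> length w")
        case True
        have "apw w p m" using gapA[OF pq(2) q1(3) between m \<open>p<q\<close> True] .
        from antip[OF m0 True this] obtain v where "is_factor v w" "is_antipower 3 v" by blast
        with H show False by blast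
      next
        case nA: False
        show False
        proof (cases "3*m \<le> q + 1")
          case True
          have ql: "q < length w" using q1 len by simp
          have "apw w (q+1-3*m) m" using gapB[OF pq(2) q1(3) between m \<open>p<q\<close> True ql] .
          moreover have "q+1-3*m + 3*m \<le> length w" using True q1 len by simp
          ultimately obtain v where "is_factor v w" "is_antipower 3 v" using antip[OF m0] by blast
          with H show False by blast
        next
          case False
          have m1': "3*m + p \<le> q + 3" using m1 \<open>p<q\<close> by linarith
          have p1: "p \<le> 1" using False m1' by linarith
          have q2: "2*k - 2 \<le> q" using nA m1' len by linarith
          have "p + 1 + k \<le> length w" using p1 len k by simp
          then obtain t' where t': "t' < k" "w!(p+1+t') \<noteq> c" using norun[of "p+1" c] by blast
          moreover have "p < p+1+t' \<and> p+1+t' < q" using t'(1) p1 q2 k by linarith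
          ultimately show False using between by blast
        qed
      qed
    qed
  qed
qed

definition cnt :: "bool list \<Rightarrow> nat" where "cnt u = length (filter id u)"

lemma cnt_app: "cnt (a @ b) = cnt a + cnt b" by (simp add: cnt_def)

lemma cnt_rep: "cnt (concat (replicate k u)) = k * cnt u"
  by (induction k) (auto simp: cnt_app cnt_def)

lemma cnt0: "cnt u = 0 \<Longrightarrow> u = replicate (length u) False"
  by (induction u) (auto simp: cnt_def split: if_splits)

lemma cnt0': "cnt u = 0 \<Longrightarrow> i < length u \<Longrightarrow> \<not> u!i"
  by (induction u arbitrary: i) (auto simp: cnt_def nth_Cons split: nat.splits if_splits)

lemma cnt_eq: "cnt a = 0 \<Longrightarrow> cnt b = 0 \<Longrightarrow> length a = length b \<Longrightarrow> a = b"
  by (rule nth_equalityI) (auto dest: cnt0')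

lemma len_rep: "length (concat (replicate k u)) = k * length u"
  by (induction k) auto

lemma lower:
  assumes k: "k \<ge> 2" and f: "is_factor v (replicate (k-1) False @ True # replicate (k-1) False)"
  shows "\<not> is_power k v \<and> \<not> is_antipower 3 v"
proof -
  let ?wl = "replicate (k-1) False @ True # replicate (k-1) False"
  obtain x y where xy: "?wl = x @ v @ y" using f unfolding is_factor_def by blast
  have cw: "cnt ?wl = 1" by (simp add: cnt_def)
  then have "cnt (x @ v @ y) = 1" unfolding xy .
  then have cv: "cnt x + cnt v + cnt y = 1" by (simp add: cnt_app)
  have "length ?wl = 2*k - 1" using k by simp
  then have "length (x @ v @ y) = 2*k - 1" unfolding xy .
  then have lw: "length x + length v + length y = 2*k - 1" by simp
  have nth: "?wl ! (k-1) = True" by (simp add: nth_append)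
  have np: "\<not> is_power k v"
  proof
    assume "is_power k v"
    then obtain u where u: "u \<noteq> []" "v = concat (replicate k u)" unfolding is_power_def by blast
    have "cnt v = k * cnt u" using u cnt_rep by simp
    have "cnt u = 0"
    proof (rule ccontr)
      assume "cnt u \<noteq> 0"
      then have "k \<le> k * cnt u" by simp
      then show False using cv k \<open>cnt v = k * cnt u\<close> by linarith
    qed
    then have "cnt v = 0" using u cnt_rep by simp
    note vf = cnt0'[OF \<open>cnt v = 0\<close>]
    have "length v = k * length u" using u len_rep by simp
    then have lv: "length v \<ge> k" using u by (cases u) auto
    have "length x \<le> k - 1" "k - 1 < length x + length v" using lw lv k by auto
    moreover have "k - 1 - length x < length v" using calculation by arith
    ultimately have "?wl ! (k-1) = v ! (k - 1 - length x)" unfolding xy by (simp add: nth_append)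
    also have "... = False" using vf \<open>k - 1 < length x + length v\<close> \<open>length x \<le> k - 1\<close> by simp
    finally show False using nth by simp
  qed
  have na: "\<not> is_antipower 3 v"
  proof
    assume "is_antipower 3 v"
    then obtain us where us: "length us = 3" "v = concat us" "distinct us"
      "\<forall>u\<in>set us. \<forall>u'\<in>set us. length u = length u'" unfolding is_antipower_def by blast
    obtain a r1 where r1: "us = a # r1" using us(1) by (cases us) auto
    obtain b r2 where r2: "r1 = b # r2" using us(1) r1 by (cases r1) auto
    obtain c r3 where r3: "r2 = c # r3" using us(1) r1 r2 by (cases r2) auto
    have "r3 = []" using us(1) r1 r2 r3 by simp
    then have abc: "us = [a,b,c]" using r1 r2 r3 by simp
    have sum: "cnt a + cnt b + cnt c \<le> 1" using cv us(2) abc by (simp add: cnt_app)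
    have ins: "a \<in> set us" "b \<in> set us" "c \<in> set us" using abc by simp_all
    have lab: "length a = length b" using us(4) ins by blast
    have lbc: "length b = length c" using us(4) ins by blast
    have lac: "length a = length c" using us(4) ins by blast
    have d3: "distinct [a,b,c]" using us(3) abc by simp
    then have nab: "a \<noteq> b" and nbc: "b \<noteq> c" and nac: "a \<noteq> c" by simp_all
    have dis: "(cnt a = 0 \<and> cnt b = 0) \<or> (cnt b = 0 \<and> cnt c = 0) \<or> (cnt a = 0 \<and> cnt c = 0)"
      using sum by linarith
    then show False
    proof (elim disjE conjE)
      assume "cnt a = 0" "cnt b = 0"
      then have "a = b" using cnt_eq lab by blast
      then show False using nab by simp
    next
      assume "cnt b = 0" "cnt c = 0"
      then have "b = c" using cnt_eq lbc by blast
      then show False using nbc by simp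
    next
      assume "cnt a = 0" "cnt c = 0"
      then have "a = c" using cnt_eq lac by blast
      then show False using nac by simp
    qed
  qed
  show ?thesis using np na by simp
qed

theorem theorem7:
  fixes k :: nat
  assumes "k \<ge> 9"
  shows "N k 3 = 2 * k"
  unfolding N_def
proof (rule Least_equality)
  show "\<forall>w :: bool list. length w = 2*k \<longrightarrow> (\<exists>v. is_factor v w \<and> (is_power k v \<or> is_antipower 3 v))"
    using upper assms by blast
next
  fix l assume A: "\<forall>w :: bool list. length w = l \<longrightarrow> (\<exists>v. is_factor v w \<and> (is_power k v \<or> is_antipower 3 v))"
  show "2*k \<le> l"
  proof (rule ccontr)
    assume "\<not> 2*k \<le> l"
    let ?wl = "replicate (k-1) False @ True # replicate (k-1) False"
    have "length (take l ?wl) = l" using \<open>\<not> 2*k \<le> l\<close> assms by simp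
    then obtain v where v: "is_factor v (take l ?wl)" "is_power k v \<or> is_antipower 3 v" using A by blast
    from v(1) obtain x y where "take l ?wl = x @ v @ y" unfolding is_factor_def by blast
    then have "?wl = x @ v @ (y @ drop l ?wl)" by (metis append_take_drop_id append.assoc)
    then have "is_factor v ?wl" unfolding is_factor_def by blast
    then show False using lower[of k v] v(2) assms by simp
  qed
qed

end
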